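(* Let $f$ be a deterministic decision tree of depth $d$ over $m$ variables $x_1,\dots,x_m$, viewed as a Boolean function $f:\{-1,1\}^m\to\{-1,1\}$. Then for every $\ell\in\{0,1,\dots,d\}$, $$L_{1,\ell}(f)=\sum_{S\subseteq[m]:|S|=\ell}|\hat f(S)|\ \le\ \sqrt{O(d)^{\ell}\cdot O(\log m)^{\ell-1}},$$ where the $O(\cdot)$ hide universal constants.
   Context: Every $f:\{-1,1\}^m\to\mathbb R$ has a unique Fourier expansion $f(x)=\sum_{S\subseteq[m]}\hat f(S)\prod_{i\in S}x_i$ with $\hat f(S)=\mathbb E_{x\sim\{-1,1\}^m}[f(x)\prod_{i\in S}x_i]$ ($x$ uniform). *)

theory Defs
  imports Complex_Main "HOL-Library.FuncSet"
begin

text \<open>Deterministic decision trees: a leaf outputs +1 (True) or -1 (False);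
  an inner node queries variable i (0-based) and goes to the left subtree if x_i = -1
  and to the right subtree if x_i = 1.\<close>
datatype dtree = Leaf bool | Node nat dtree dtree

fun dt_depth :: "dtree \<Rightarrow> nat" where
  "dt_depth (Leaf b) = 0"
| "dt_depth (Node i l r) = Suc (max (dt_depth l) (dt_depth r))"

fun dt_vars_below :: "nat \<Rightarrow> dtree \<Rightarrow> bool" where
  "dt_vars_below m (Leaf b) = True"
| "dt_vars_below m (Node i l r) = (i < m \<and> dt_vars_below m l \<and> dt_vars_below m r)"

fun dt_eval :: "dtree \<Rightarrow> (nat \<Rightarrow> real) \<Rightarrow> real" where
  "dt_eval (Leaf b) x = (if b then 1 else -1)"
| "dt_eval (Node i l r) x = (if x i = 1 then dt_eval r x else dt_eval l x)"

text \<open>The Boolean cube {-1,1}^m, points as functions on {0..<m} (undefined elsewhere).\<close>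
definition cube :: "nat \<Rightarrow> (nat \<Rightarrow> real) set" where
  "cube m = PiE {0..<m} (\<lambda>_. {-1, 1})"

definition fourier_coeff :: "nat \<Rightarrow> ((nat \<Rightarrow> real) \<Rightarrow> real) \<Rightarrow> nat set \<Rightarrow> real" where
  "fourier_coeff m f S = (\<Sum>x\<in>cube m. f x * (\<Prod>i\<in>S. x i)) / 2 ^ m"

definition L1_level :: "nat \<Rightarrow> ((nat \<Rightarrow> real) \<Rightarrow> real) \<Rightarrow> nat \<Rightarrow> real" where
  "L1_level m f l = (\<Sum>S\<in>{S. S \<subseteq> {0..<m} \<and> card S = l}. \<bar>fourier_coeff m f S\<bar>)"

end

theory Submission
  imports Defs
begin

fun pen :: "nat \<Rightarrow> dtree \<Rightarrow> (dtree \<Rightarrow> (nat\<Rightarrow>real) \<Rightarrow> real) \<Rightarrow> (nat\<Rightarrow>real) \<Rightarrow> real" where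
  "pen 0 T G z = G T z"
| "pen (Suc n) (Leaf b) G z = G (Leaf b) z"
| "pen (Suc n) (Node i l r) G z = (if z i = 0 then (pen n l G (z(i:=-1)) + pen n r G (z(i:=1)))/2
      else if z i = 1 then pen n r G z else pen n l G z)"

definition stp :: "(dtree \<Rightarrow> (nat\<Rightarrow>real) \<Rightarrow> real) \<Rightarrow> dtree \<Rightarrow> (nat\<Rightarrow>real) \<Rightarrow> real" where
  "stp G T z = (case T of Leaf b \<Rightarrow> G (Leaf b) z | Node i l r \<Rightarrow>
     (if z i = 0 then (G l (z(i:=-1)) + G r (z(i:=1)))/2 else if z i = 1 then G r z else G l z))"

lemma pen_tower: "pen (Suc n) T G z = pen n T (stp G) z"
proof (induction n arbitrary: T z)
  case 0
  then show ?case by (cases T) (auto simp: stp_def)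
next
  case (Suc n)
  show ?case
  proof (cases T)
    case (Leaf b)
    then show ?thesis by (simp add: stp_def)
  next
    case (Node i l r)
    then show ?thesis by (simp only: pen.simps Suc.IH)
  qed
qed

lemma pen_mono: "(\<And>T z. G T z \<le> H T z) \<Longrightarrow> pen n T G z \<le> pen n T H z"
proof (induction n arbitrary: T z)
  case 0
  then show ?case by simp
next
  case (Suc n)
  then show ?case by (cases T) (auto simp: add_mono divide_right_mono)
qed

lemma pen_add: "pen n T (\<lambda>T z. G T z + H T z) z = pen n T G z + pen n T H z"
proof (induction n arbitrary: T z)
  case 0
  then show ?case by simp
next
  case (Suc n)
  show ?case
  proof (cases T)
    case (Leaf b)
    then show ?thesis by simp
  next
    case (Node i l r)
    show ?thesis unfolding Node pen.simps Suc.IH by (simp add: field_simps)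
  qed
qed

lemma pen_cmult: "pen n T (\<lambda>T z. c * G T z) z = c * pen n T G z"
proof (induction n arbitrary: T z)
  case 0
  then show ?case by simp
next
  case (Suc n)
  show ?case
  proof (cases T)
    case (Leaf b)
    then show ?thesis by simp
  next
    case (Node i l r)
    show ?thesis unfolding Node pen.simps Suc.IH by (simp add: field_simps)
  qed
qed

lemma pen_const: "pen n T (\<lambda>T z. c) z = c"
proof (induction n arbitrary: T z)
  case 0
  then show ?case by simp
next
  case (Suc n)
  show ?case
  proof (cases T)
    case (Leaf b)
    then show ?thesis by simp
  next
    case (Node i l r)
    show ?thesis unfolding Node pen.simps Suc.IH by (simp add: field_simps)
  qed
qed

lemma pen_sum: "finite I \<Longrightarrow> pen n T (\<lambda>T z. \<Sum>i\<in>I. G i T z) z = (\<Sum>i\<in>I. pen n T (G i) z)"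
proof (induction I rule: finite_induct)
  case empty
  then show ?case by (simp add: pen_const)
next
  case (insert x F)
  then show ?case by (simp add: pen_add)
qed

lemma pen_nonneg: "(\<And>T z. 0 \<le> G T z) \<Longrightarrow> 0 \<le> pen n T G z"
  using pen_mono[of "\<lambda>T z. 0" G n T z] by (simp add: pen_const)

lemma pen_abs: "\<bar>pen n T G z\<bar> \<le> pen n T (\<lambda>T z. \<bar>G T z\<bar>) z"
proof -
  have "pen n T G z \<le> pen n T (\<lambda>T z. \<bar>G T z\<bar>) z" by (rule pen_mono) simp
  moreover have "- pen n T G z \<le> pen n T (\<lambda>T z. \<bar>G T z\<bar>) z"
    using pen_mono[of "\<lambda>T z. - G T z" "\<lambda>T z. \<bar>G T z\<bar>" n T z] pen_cmult[of n T "-1" G z] by simp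
  ultimately show ?thesis by simp
qed

lemma conv_pow:
  fixes u v t :: real
  assumes "0 \<le> u" "0 \<le> v" "0 \<le> t" "t \<le> 1"
  shows "(t*u + (1-t)*v)^k \<le> t*u^k + (1-t)*v^k"
proof (induction k)
  case 0
  then show ?case by simp
next
  case (Suc k)
  have nn: "0 \<le> t*u + (1-t)*v" using assms by simp
  have "(t*u + (1-t)*v)^Suc k = (t*u + (1-t)*v) * (t*u + (1-t)*v)^k" by simp
  also have "\<dots> \<le> (t*u + (1-t)*v) * (t*u^k + (1-t)*v^k)"
    using Suc nn by (simp add: mult_left_mono)
  also have "\<dots> \<le> t*u^Suc k + (1-t)*v^Suc k"
  proof -
    have "0 \<le> (u - v) * (u^k - v^k)"
    proof (cases "u \<le> v")
      case True
      then have "u^k \<le> v^k" using assms power_mono by blast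
      then show ?thesis using True by (simp add: mult_nonpos_nonpos)
    next
      case False
      then have "v^k \<le> u^k" using assms power_mono by (metis linear)
      then show ?thesis using False by simp
    qed
    then have "0 \<le> t*(1-t)*((u - v) * (u^k - v^k))" using assms by simp
    then show ?thesis by (simp add: algebra_simps)
  qed
  finally show ?case .
qed

lemma pen_jensen: "(\<And>T z. 0 \<le> G T z) \<Longrightarrow> (pen n T G z)^k \<le> pen n T (\<lambda>T z. (G T z)^k) z"
proof (induction n arbitrary: T z)
  case 0
  then show ?case by simp
next
  case (Suc n)
  show ?case
  proof (cases T)
    case (Leaf b)
    then show ?thesis by simp
  next
    case (Node i l r)
    let ?a = "pen n l G (z(i:=-1))" and ?b = "pen n r G (z(i:=1))"
    have a: "0 \<le> ?a" "0 \<le> ?b" using Suc.prems pen_nonneg by auto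
    have "((?a + ?b)/2)^k \<le> (1/2)*?a^k + (1-1/2)*?b^k"
      using conv_pow[of ?a ?b "1/2" k] a by (simp add: field_simps)
    also have "\<dots> \<le> (1/2)*pen n l (\<lambda>T z. (G T z)^k) (z(i:=-1)) + (1-1/2)* pen n r (\<lambda>T z. (G T z)^k) (z(i:=1))"
      using Suc.IH[OF Suc.prems] by (intro add_mono mult_left_mono) auto
    finally show ?thesis using Node Suc by (auto simp: field_simps)
  qed
qed

lemma bin_step: "Suc k * (n choose Suc k) = (n - k) * (n choose k)"
  using binomial_absorption[of k n] binomial_absorb_comp[of n k] by simp

lemma bin_ineq: "j \<le> r \<Longrightarrow> real ((2*r) choose (2*j)) \<le> real (r choose j) * (2*real r - 1)^j"
proof (induction j)
  case 0
  then show ?case by simp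
next
  case (Suc j)
  let ?K = "2*real r - 1"
  have jr: "j < r" using Suc.prems by simp
  have IH: "real ((2*r) choose (2*j)) \<le> real (r choose j) * ?K^j" using Suc jr by simp
  have i1: "real (Suc (2*j)) * real ((2*r) choose Suc (2*j)) = real (2*r - 2*j) * real ((2*r) choose (2*j))"
    using bin_step[of "2*j" "2*r"] by (metis of_nat_mult)
  have i2: "real (Suc (Suc (2*j))) * real ((2*r) choose Suc (Suc (2*j))) = real (2*r - Suc (2*j)) * real ((2*r) choose Suc (2*j))"
    using bin_step[of "Suc (2*j)" "2*r"] by (metis of_nat_mult)
  have i3: "real (Suc j) * real (r choose Suc j) = real (r - j) * real (r choose j)"
    using bin_step[of j r] by (metis of_nat_mult)
  have a1: "real (2*r - 2*j) = 2*(real r - real j)" using jr by (simp add: of_nat_diff)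
  have a2: "real (2*r - Suc (2*j)) = 2*real r - 2*real j - 1" using jr by (simp add: of_nat_diff)
  have a3: "real (r - j) = real r - real j" using jr by (simp add: of_nat_diff)
  define c0 where "c0 = real ((2*r) choose (2*j))"
  define c1 where "c1 = real ((2*r) choose Suc (2*j))"
  define c2 where "c2 = real ((2*r) choose Suc (Suc (2*j)))"
  define d0 where "d0 = real (r choose j)"
  define d1 where "d1 = real (r choose Suc j)"
  have e1: "(2*real j + 1) * c1 = 2*(real r - real j) * c0" using i1 a1 by (auto simp: c1_def c0_def add.commute)
  have e2: "(2*real j + 2) * c2 = (2*real r - 2*real j - 1) * c1" using i2 a2 by (auto simp: c2_def c1_def add.commute)
  have e3: "(real j + 1) * d1 = (real r - real j) * d0" using i3 a3 by (auto simp: d1_def d0_def add.commute)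
  have pos: "0 \<le> real r - real j - 1" using jr by simp
  have Kp: "0 \<le> ?K^j" using jr by simp
  have "(2*real j + 1) * (2*real j + 2) * c2 = (2*real r - 2*real j - 1) * (2*(real r - real j) * c0)"
    using e1 e2 by (metis mult.assoc mult.left_commute)
  also have "\<dots> \<le> (2*real r - 2*real j - 1) * (2*(real r - real j) * (d0 * ?K^j))"
    using IH pos by (intro mult_left_mono) (auto simp: c0_def d0_def)
  also have "\<dots> = (2*real r - 2*real j - 1) * 2 * ((real j + 1) * d1) * ?K^j"
    unfolding e3 by (simp add: algebra_simps)
  also have "\<dots> \<le> (2*real j + 1) * ?K * 2 * ((real j + 1) * d1) * ?K^j"
  proof -
    have q: "(2*real j + 1) * ?K - (2*real r - 2*real j - 1) = 4*real j*real r"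
      by (simp add: algebra_simps)
    have "0 \<le> 4*real j*real r" by simp
    then have "2*real r - 2*real j - 1 \<le> (2*real j + 1) * ?K" using q by linarith
    moreover have "0 \<le> 2 * ((real j + 1) * d1) * ?K^j" using Kp by (simp add: d1_def)
    ultimately have "(2*real r - 2*real j - 1) * (2 * ((real j + 1) * d1) * ?K^j) \<le> ((2*real j + 1) * ?K) * (2 * ((real j + 1) * d1) * ?K^j)"
      by (rule mult_right_mono)
    then show ?thesis by (simp only: mult.assoc)
  qed
  also have "\<dots> = (2*real j + 1) * (2*real j + 2) * (d1 * ?K^Suc j)" by (simp add: algebra_simps)
  finally have "(2*real j + 1) * (2*real j + 2) * c2 \<le> (2*real j + 1) * (2*real j + 2) * (d1 * ?K^Suc j)" .
  then have "c2 \<le> d1 * ?K^Suc j"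
    by (rule mult_left_le_imp_le) simp
  then show ?case by (simp add: c2_def d1_def)
qed

lemma sum_even_odd: "(\<Sum>k\<le>2*(r::nat). (h::nat\<Rightarrow>real) k) = (\<Sum>j\<le>r. h (2*j)) + (\<Sum>j<r. h (2*j+1))"
proof (induction r)
  case 0
  then show ?case by simp
next
  case (Suc r)
  have "2 * Suc r = Suc (Suc (2*r))" by simp
  then have "(\<Sum>k\<le>2*Suc r. h k) = (\<Sum>k\<le>2*r. h k) + h (2*r+1) + h (2*r+2)"
    by (simp add: sum.atMost_Suc)
  then show ?case using Suc by (simp add: sum.atMost_Suc sum.lessThan_Suc)
qed

lemma two_point:
  fixes y g :: real
  shows "((y+g)^(2*r) + (y-g)^(2*r))/2 \<le> (y^2 + (2*real r - 1)*g^2)^r"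
proof -
  define h where "h k = real ((2*r) choose k) * (g^k + (-g)^k) * y^(2*r-k)" for k
  have "(g+y)^(2*r) + ((-g)+y)^(2*r) = (\<Sum>k\<le>2*r. h k)"
    unfolding binomial_ring h_def by (simp add: sum.distrib[symmetric] algebra_simps)
  also have "\<dots> = (\<Sum>j\<le>r. h (2*j)) + (\<Sum>j<r. h (2*j+1))" by (rule sum_even_odd)
  also have "(\<Sum>j<r. h (2*j+1)) = 0" unfolding h_def by simp
  also have "(\<Sum>j\<le>r. h (2*j)) = (\<Sum>j\<le>r. 2 * (real ((2*r) choose (2*j)) * (g^2)^j * (y^2)^(r-j)))"
    unfolding h_def by (intro sum.cong refl) (simp add: power_mult[symmetric] diff_mult_distrib2)
  finally have L: "((y+g)^(2*r) + (y-g)^(2*r))/2 = (\<Sum>j\<le>r. real ((2*r) choose (2*j)) * (g^2)^j * (y^2)^(r-j))"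
    by (simp add: sum_distrib_left[symmetric] add.commute)
  have R: "(y^2 + (2*real r - 1)*g^2)^r = (\<Sum>j\<le>r. real (r choose j) * ((2*real r - 1)*g^2)^j * (y^2)^(r-j))"
    using binomial_ring[of "(2*real r - 1)*g^2" "y^2" r] by (simp add: add.commute)
  show ?thesis unfolding L R
  proof (rule sum_mono)
    fix j assume "j \<in> {..r}"
    then have "real ((2*r) choose (2*j)) \<le> real (r choose j) * (2*real r - 1)^j" by (simp add: bin_ineq)
    moreover have "0 \<le> (g^2)^j * (y^2)^(r-j)" by simp
    ultimately have "real ((2*r) choose (2*j)) * ((g^2)^j * (y^2)^(r-j)) \<le> real (r choose j) * (2*real r - 1)^j * ((g^2)^j * (y^2)^(r-j))"
      by (rule mult_right_mono)
    then show "real ((2*r) choose (2*j)) * (g^2)^j * (y^2)^(r-j) \<le> real (r choose j) * ((2*real r - 1)*g^2)^j * (y^2)^(r-j)"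
      by (simp add: power_mult_distrib mult.assoc)
  qed
qed

definition ev :: "nat \<Rightarrow> (nat set \<Rightarrow> real) \<Rightarrow> (nat \<Rightarrow> real) \<Rightarrow> real" where
  "ev m a z = (\<Sum>S\<in>Pow {0..<m}. a S * (\<Prod>j\<in>S. z j))"

definition Dv :: "nat \<Rightarrow> (nat set \<Rightarrow> real) \<Rightarrow> nat set \<Rightarrow> real" where
  "Dv i a S = (if i \<in> S then 0 else a (insert i S))"

definition gf :: "nat \<Rightarrow> (nat set \<Rightarrow> real) \<Rightarrow> dtree \<Rightarrow> (nat \<Rightarrow> real) \<Rightarrow> real" where
  "gf m a T z = (case T of Leaf b \<Rightarrow> 0 | Node i l r \<Rightarrow> if i < m \<and> z i = 0 then ev m (Dv i a) z else 0)"

lemma ev_split: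
  assumes "i < m"
  shows "ev m a w = (\<Sum>S\<in>{S. S \<subseteq> {0..<m} \<and> i \<notin> S}. a S * (\<Prod>j\<in>S. w j))
     + (\<Sum>S\<in>{S. S \<subseteq> {0..<m} \<and> i \<notin> S}. a (insert i S) * (w i * (\<Prod>j\<in>S. w j)))"
proof -
  let ?A = "{S. S \<subseteq> {0..<m} \<and> i \<notin> S}"
  have P: "Pow {0..<m} = ?A \<union> insert i ` ?A"
  proof (rule set_eqI, rule iffI)
    fix S assume "S \<in> Pow {0..<m}"
    then show "S \<in> ?A \<union> insert i ` ?A"
    proof (cases "i \<in> S")
      case True
      then have "S = insert i (S - {i})" by auto
      then show ?thesis using \<open>S \<in> Pow {0..<m}\<close> by (auto intro!: image_eqI[of _ _ "S - {i}"])
    qed auto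
  qed (use assms in auto)
  have D: "?A \<inter> insert i ` ?A = {}" by auto
  have inj: "inj_on (insert i) ?A"
    by (rule inj_onI) (metis (no_types, lifting) mem_Collect_eq insert_ident)
  have fin: "finite ?A" by (rule finite_subset[of _ "Pow {0..<m}"]) auto
  have "ev m a w = (\<Sum>S\<in>?A. a S * (\<Prod>j\<in>S. w j)) + (\<Sum>S\<in>insert i ` ?A. a S * (\<Prod>j\<in>S. w j))"
    unfolding ev_def P by (rule sum.union_disjoint) (use fin D in auto)
  also have "(\<Sum>S\<in>insert i ` ?A. a S * (\<Prod>j\<in>S. w j)) = (\<Sum>S\<in>?A. a (insert i S) * (\<Prod>j\<in>insert i S. w j))"
    by (subst sum.reindex[OF inj]) simp
  also have "\<dots> = (\<Sum>S\<in>?A. a (insert i S) * (w i * (\<Prod>j\<in>S. w j)))"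
  proof (rule sum.cong[OF refl])
    fix S assume "S \<in> ?A"
    then have "finite S" "i \<notin> S" using finite_subset by auto
    then show "a (insert i S) * (\<Prod>j\<in>insert i S. w j) = a (insert i S) * (w i * (\<Prod>j\<in>S. w j))"
      by simp
  qed
  finally show ?thesis .
qed

lemma ev_Dv:
  assumes "i < m"
  shows "ev m (Dv i a) w = (\<Sum>S\<in>{S. S \<subseteq> {0..<m} \<and> i \<notin> S}. a (insert i S) * (\<Prod>j\<in>S. w j))"
  unfolding ev_split[OF assms, of "Dv i a"] by (simp add: Dv_def)

lemma ev_upd:
  assumes "i < m" "z i = 0"
  shows "ev m a (z(i:=c)) = ev m a z + c * ev m (Dv i a) z"
proof -
  let ?A = "{S. S \<subseteq> {0..<m} \<and> i \<notin> S}"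
  have pc: "(\<Prod>j\<in>S. (z(i:=c)) j) = (\<Prod>j\<in>S. z j)" if "S \<in> ?A" for S
    using that by (intro prod.cong) auto
  have s1: "(\<Sum>S\<in>?A. a S * (\<Prod>j\<in>S. (z(i:=c)) j)) = (\<Sum>S\<in>?A. a S * (\<Prod>j\<in>S. z j))"
    by (rule sum.cong[OF refl], subst pc, assumption, rule refl)
  have s2: "(\<Sum>S\<in>?A. a (insert i S) * ((z(i:=c)) i * (\<Prod>j\<in>S. (z(i:=c)) j))) = (\<Sum>S\<in>?A. c * (a (insert i S) * (\<Prod>j\<in>S. z j)))"
    by (rule sum.cong[OF refl], subst pc, assumption, simp)
  show ?thesis
    unfolding ev_split[OF assms(1), of a "z(i:=c)"] ev_split[OF assms(1), of a z] ev_Dv[OF assms(1)] s1 s2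
    using assms(2) by (simp add: sum_distrib_left)
qed

lemma ev_upd_ge:
  assumes "m \<le> i"
  shows "ev m a (z(i:=c)) = ev m a z"
  unfolding ev_def
  by (intro sum.cong refl arg_cong2[where f="(*)"] prod.cong) (use assms in auto)

lemma stp_bound:
  assumes "1 \<le> r"
  shows "stp (\<lambda>T z. (ev m a z)^(2*r)) T z \<le> ((ev m a z)^2 + (2*real r - 1)*(gf m a T z)^2)^r"
proof (cases T)
  case (Leaf b)
  then show ?thesis by (simp add: stp_def gf_def power_mult)
next
  case (Node i l r')
  show ?thesis
  proof (cases "z i = 0")
    case True
    show ?thesis
    proof (cases "i < m")
      case True2: True
      have "stp (\<lambda>T z. (ev m a z)^(2*r)) T z
          = ((ev m a z + ev m (Dv i a) z)^(2*r) + (ev m a z - ev m (Dv i a) z)^(2*r))/2"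
        using Node True True2 by (simp add: stp_def ev_upd add.commute)
      also have "\<dots> \<le> ((ev m a z)^2 + (2*real r - 1)*(ev m (Dv i a) z)^2)^r" by (rule two_point)
      finally show ?thesis using Node True True2 by (simp add: gf_def)
    next
      case False
      then show ?thesis using Node True by (simp add: stp_def gf_def ev_upd_ge power_mult)
    qed
  next
    case False
    then show ?thesis using Node by (simp add: stp_def gf_def power_mult)
  qed
qed

lemma holder_pt:
  fixes A B al ga :: real
  assumes "0 \<le> A" "0 \<le> B" "0 < al" "0 < ga"
  shows "(A+B)^Suc k \<le> (al+ga)^k * (1/al^k) * A^Suc k + (al+ga)^k * (1/ga^k) * B^Suc k"
proof -
  define t where "t = al/(al+ga)"
  define u where "u = A*(al+ga)/al"
  define v where "v = B*(al+ga)/ga"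
  have t01: "0 \<le> t" "t \<le> 1" using assms by (auto simp: t_def)
  have uv: "0 \<le> u" "0 \<le> v" using assms by (auto simp: u_def v_def)
  have 1: "1 - t = ga/(al+ga)" using assms by (simp add: t_def field_simps)
  have ne: "al + ga \<noteq> 0" using assms by simp
  have "t*u = A" using assms ne by (simp add: t_def u_def)
  moreover have "(1-t)*v = B" using assms ne by (simp add: 1 v_def)
  ultimately have eq: "A + B = t*u + (1-t)*v" by simp
  have "(A+B)^Suc k \<le> t*u^Suc k + (1-t)*v^Suc k" unfolding eq by (rule conv_pow[OF uv t01])
  also have "t*u^Suc k = (al+ga)^k * (1/al^k) * A^Suc k"
  proof -
    have "u^Suc k = A^Suc k * ((al+ga) * (al+ga)^k) / (al * al^k)"
      unfolding u_def power_divide power_mult_distrib by simp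
    then show ?thesis using assms ne by (simp add: t_def field_simps)
  qed
  also have "(1-t)*v^Suc k = (al+ga)^k * (1/ga^k) * B^Suc k"
  proof -
    have "v^Suc k = B^Suc k * ((al+ga) * (al+ga)^k) / (ga * ga^k)"
      unfolding v_def power_divide power_mult_distrib by simp
    then show ?thesis using assms ne by (simp add: 1 field_simps)
  qed
  finally show ?thesis .
qed

lemma pen_mink:
  assumes "1 \<le> r" "0 < al" "0 < ga" "\<And>T z. 0 \<le> A T z" "\<And>T z. 0 \<le> B T z"
    "pen n T (\<lambda>T z. (A T z)^r) z \<le> al^r" "pen n T (\<lambda>T z. (B T z)^r) z \<le> ga^r"
  shows "pen n T (\<lambda>T z. (A T z + B T z)^r) z \<le> (al+ga)^r"
proof -
  obtain k where k: "r = Suc k" using assms(1) by (cases r) auto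
  have "pen n T (\<lambda>T z. (A T z + B T z)^r) z \<le>
     pen n T (\<lambda>T z. (al+ga)^k * (1/al^k) * (A T z)^r + (al+ga)^k * (1/ga^k) * (B T z)^r) z"
    unfolding k by (rule pen_mono) (rule holder_pt, use assms in auto)
  also have "\<dots> = (al+ga)^k * (1/al^k) * pen n T (\<lambda>T z. (A T z)^r) z + (al+ga)^k * (1/ga^k) * pen n T (\<lambda>T z. (B T z)^r) z"
    by (simp only: pen_add pen_cmult)
  also have "\<dots> \<le> (al+ga)^k * (1/al^k) * al^r + (al+ga)^k * (1/ga^k) * ga^r"
    using assms by (intro add_mono mult_left_mono) auto
  also have "\<dots> = (al+ga)^r" using assms unfolding k by (simp add: field_simps)
  finally show ?thesis .
qed

lemma mart:
  assumes r: "1 \<le> r" and b: "0 < be" and y0: "(ev m a z0)^2 \<le> be"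
    and g: "\<And>k. k < n \<Longrightarrow> pen k T (\<lambda>T z. (gf m a T z)^(2*r)) z0 \<le> be^r"
  shows "pen n T (\<lambda>T z. (ev m a z)^(2*r)) z0 \<le> ((1 + real n*(2*real r - 1))*be)^r"
  using g
proof (induction n)
  case 0
  have "(ev m a z0)^(2*r) = ((ev m a z0)^2)^r" by (simp add: power_mult)
  also have "\<dots> \<le> be^r" using y0 by (intro power_mono) auto
  finally show ?case by simp
next
  case (Suc n)
  have K: "0 < 2*real r - 1" using r by simp
  have "pen (Suc n) T (\<lambda>T z. (ev m a z)^(2*r)) z0 = pen n T (stp (\<lambda>T z. (ev m a z)^(2*r))) z0"
    by (rule pen_tower)
  also have "\<dots> \<le> pen n T (\<lambda>T z. ((ev m a z)^2 + (2*real r - 1)*(gf m a T z)^2)^r) z0"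
    by (rule pen_mono) (rule stp_bound[OF r])
  also have "\<dots> \<le> ((1 + real n*(2*real r - 1))*be + (2*real r - 1)*be)^r"
  proof (rule pen_mink[OF r])
    show "0 < (1 + real n*(2*real r - 1))*be" using K b by (simp add: add_pos_nonneg)
    show "0 < (2*real r - 1)*be" using K b by simp
    show "pen n T (\<lambda>T z. ((ev m a z)^2)^r) z0 \<le> ((1 + real n*(2*real r - 1))*be)^r"
      using Suc by (simp add: power_mult)
    have "pen n T (\<lambda>T z. ((2*real r - 1)*(gf m a T z)^2)^r) z0 = (2*real r - 1)^r * pen n T (\<lambda>T z. (gf m a T z)^(2*r)) z0"
      by (simp add: power_mult_distrib power_mult pen_cmult)
    also have "\<dots> \<le> (2*real r - 1)^r * be^r" using Suc.prems K by (intro mult_left_mono) auto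
    finally show "pen n T (\<lambda>T z. ((2*real r - 1)*(gf m a T z)^2)^r) z0 \<le> ((2*real r - 1)*be)^r"
      by (simp add: power_mult_distrib)
  qed (use K in auto)
  also have "(1 + real n*(2*real r - 1))*be + (2*real r - 1)*be = (1 + real (Suc n)*(2*real r - 1))*be"
    by (simp add: algebra_simps)
  finally show ?case .
qed

definition hom :: "nat \<Rightarrow> nat \<Rightarrow> (nat set \<Rightarrow> real) \<Rightarrow> bool" where
  "hom m k a = (\<forall>S. S \<subseteq> {0..<m} \<longrightarrow> a S \<noteq> 0 \<longrightarrow> card S = k)"

definition bnd :: "(nat set \<Rightarrow> real) \<Rightarrow> bool" where
  "bnd a = (\<forall>S. \<bar>a S\<bar> \<le> 1)"

lemma ev_single:
  assumes "\<And>S. S \<subseteq> {0..<m} \<Longrightarrow> S \<noteq> {} \<Longrightarrow> a S * (\<Prod>j\<in>S. z j) = 0"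
  shows "ev m a z = a {}"
proof -
  have "ev m a z = a {} * (\<Prod>j\<in>{}. z j) + (\<Sum>S\<in>Pow {0..<m} - {{}}. a S * (\<Prod>j\<in>S. z j))"
    unfolding ev_def by (rule sum.remove) auto
  also have "(\<Sum>S\<in>Pow {0..<m} - {{}}. a S * (\<Prod>j\<in>S. z j)) = 0"
  proof (rule sum.neutral, rule ballI)
    fix S assume "S \<in> Pow {0..<m} - {{}}"
    then have "S \<subseteq> {0..<m}" "S \<noteq> {}" by auto
    then show "a S * (\<Prod>j\<in>S. z j) = 0" by (rule assms)
  qed
  finally show ?thesis by simp
qed

lemma ev_zero: "ev m a (\<lambda>_. 0) = a {}"
proof (rule ev_single)
  fix S :: "nat set" assume S: "S \<subseteq> {0..<m}" "S \<noteq> {}"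
  have "finite S" by (rule finite_subset[OF S(1)]) simp
  moreover obtain x where "x \<in> S" using S(2) by blast
  ultimately have "(\<Prod>j\<in>S. (0::real)) = 0" by (intro prod_zero) auto
  then show "a S * (\<Prod>j\<in>S. (0::real)) = 0" by simp
qed

lemma ev_hom0:
  assumes h: "hom m 0 a"
  shows "ev m a z = a {}"
proof (rule ev_single)
  fix S :: "nat set" assume S: "S \<subseteq> {0..<m}" "S \<noteq> {}"
  have "finite S" by (rule finite_subset[OF S(1)]) simp
  then have "card S \<noteq> 0" using S(2) by simp
  moreover have "\<forall>S. S \<subseteq> {0..<m} \<longrightarrow> a S \<noteq> 0 \<longrightarrow> card S = 0" using h unfolding hom_def .
  ultimately have "a S = 0" using S(1) by auto
  then show "a S * (\<Prod>j\<in>S. z j) = 0" by simp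
qed

lemma hom_Dv: "i < m \<Longrightarrow> hom m k a \<Longrightarrow> hom m (k - 1) (Dv i a)"
  unfolding hom_def
proof (intro allI impI)
  fix S assume i: "i < m" and h: "\<forall>S. S \<subseteq> {0..<m} \<longrightarrow> a S \<noteq> 0 \<longrightarrow> card S = k"
    and S: "S \<subseteq> {0..<m}" and nz: "Dv i a S \<noteq> 0"
  then have iS: "i \<notin> S" and "a (insert i S) \<noteq> 0" by (auto simp: Dv_def split: if_splits)
  moreover have "insert i S \<subseteq> {0..<m}" using i S by auto
  ultimately have "card (insert i S) = k" using h by simp
  moreover have "finite S" using S finite_subset by auto
  ultimately show "card S = k - 1" using iS by simp
qed

lemma bnd_Dv: "bnd a \<Longrightarrow> bnd (Dv i a)"
  unfolding bnd_def Dv_def by auto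

lemma even_pow_nonneg: "0 \<le> (x::real)^(2*r)"
  by (simp add: power_mult)

lemma gf_bound:
  assumes r: "1 \<le> r"
  shows "(gf m a T z)^(2*r) \<le> (\<Sum>i<m. (ev m (Dv i a) z)^(2*r))"
proof -
  have z0: "(0::real)^(2*r) = 0" using r by simp
  show ?thesis
proof (cases T)
  case (Leaf b)
  then have "gf m a T z = 0" by (simp add: gf_def)
  then show ?thesis unfolding z0 by (simp only: z0) (rule sum_nonneg, rule even_pow_nonneg)
next
  case (Node i l rr)
  show ?thesis
  proof (cases "i < m \<and> z i = 0")
    case True
    then have "(gf m a T z)^(2*r) = (ev m (Dv i a) z)^(2*r)" using Node by (simp add: gf_def)
    also have "\<dots> \<le> (\<Sum>i<m. (ev m (Dv i a) z)^(2*r))"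
      by (rule member_le_sum) (use True even_pow_nonneg in auto)
    finally show ?thesis .
  next
    case False
    then have "gf m a T z = 0" using Node by (auto simp: gf_def)
    then show ?thesis by (simp only: z0) (rule sum_nonneg, rule even_pow_nonneg)
  qed
qed
qed

lemma deg0_bound:
  assumes "hom m 0 a" "bnd a"
  shows "pen n T (\<lambda>T z. (ev m a z)^(2*r)) z \<le> 1"
proof -
  have "pen n T (\<lambda>T z. (ev m a z)^(2*r)) z \<le> pen n T (\<lambda>T z. 1) z"
  proof (rule pen_mono)
    fix T z
    have "\<bar>a {}\<bar> \<le> 1" using assms(2) by (simp add: bnd_def)
    then have "\<bar>a {}\<bar>^(2*r) \<le> 1" by (simp add: power_le_one)
    then show "(ev m a z)^(2*r) \<le> 1" using ev_hom0[OF assms(1)] by (simp add: power_even_abs)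
  qed
  then show ?thesis by (simp add: pen_const)
qed

lemma gf_pen_bound:
  assumes r: "1 \<le> r" and m: "real m \<le> 3^r" and B: "0 \<le> B"
    and IH: "\<And>i. i < m \<Longrightarrow> pen k T (\<lambda>T z. (ev m (Dv i a) z)^(2*r)) (\<lambda>_. 0) \<le> B^r"
  shows "pen k T (\<lambda>T z. (gf m a T z)^(2*r)) (\<lambda>_. 0) \<le> (3*B)^r"
proof -
  have "pen k T (\<lambda>T z. (gf m a T z)^(2*r)) (\<lambda>_. 0) \<le> pen k T (\<lambda>T z. \<Sum>i<m. (ev m (Dv i a) z)^(2*r)) (\<lambda>_. 0)"
    by (rule pen_mono) (rule gf_bound[OF r])
  also have "\<dots> = (\<Sum>i<m. pen k T (\<lambda>T z. (ev m (Dv i a) z)^(2*r)) (\<lambda>_. 0))"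
    by (rule pen_sum) simp
  also have "\<dots> \<le> (\<Sum>i<m. B^r)" by (rule sum_mono) (use IH in auto)
  also have "\<dots> = real m * B^r" by simp
  also have "\<dots> \<le> 3^r * B^r" using m B by (intro mult_right_mono) auto
  finally show ?thesis by (simp add: power_mult_distrib)
qed

lemma hom_empty:
  assumes "hom m k a" "0 < k"
  shows "a {} = 0"
proof -
  have "{} \<subseteq> {0..<m} \<longrightarrow> a {} \<noteq> 0 \<longrightarrow> card ({}::nat set) = k"
    using assms(1) unfolding hom_def by (rule spec)
  then show ?thesis using assms(2) by simp
qed

lemma moment:
  assumes r: "1 \<le> r" and m: "real m \<le> 3^r"
  shows "n \<le> d \<Longrightarrow> hom m k a \<Longrightarrow> bnd a \<Longrightarrow>
    pen n T (\<lambda>T z. (ev m a z)^(2*r)) (\<lambda>_. 0) \<le> ((6*real r*(real d+1))^k)^r"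
proof (induction k arbitrary: a n)
  case 0
  then show ?case using deg0_bound by simp
next
  case (Suc k)
  define B where "B = (6*real r*(real d+1))^k"
  have Bp: "0 < B" using r by (simp add: B_def)
  have y0: "(ev m a (\<lambda>_. 0))^2 \<le> 3*B"
  proof -
    have "a {} = 0" using hom_empty[OF Suc.prems(2)] by simp
    then show ?thesis using Bp by (simp add: ev_zero)
  qed
  have g: "pen j T (\<lambda>T z. (gf m a T z)^(2*r)) (\<lambda>_. 0) \<le> (3*B)^r" if "j < n" for j
  proof (rule gf_pen_bound[OF r m])
    show "0 \<le> B" using Bp by simp
    fix i assume "i < m"
    have j: "j \<le> d" using that Suc.prems(1) by simp
    have h: "hom m k (Dv i a)" using hom_Dv[OF \<open>i < m\<close> Suc.prems(2)] by simp
    have b: "bnd (Dv i a)" using bnd_Dv[OF Suc.prems(3)] .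
    show "pen j T (\<lambda>T z. (ev m (Dv i a) z)^(2*r)) (\<lambda>_. 0) \<le> B^r"
      unfolding B_def by (rule Suc.IH[OF j h b])
  qed
  have "pen n T (\<lambda>T z. (ev m a z)^(2*r)) (\<lambda>_. 0) \<le> ((1 + real n*(2*real r - 1))*(3*B))^r"
  proof -
    have "0 < 3*B" using Bp by simp
    from mart[OF r this y0 g] show ?thesis .
  qed
  also have "\<dots> \<le> ((6*real r*(real d+1))^Suc k)^r"
  proof (rule power_mono)
    have "real n * (2*real r - 1) \<le> real d * (2*real r - 1)"
      using Suc.prems(1) r by (intro mult_right_mono) auto
    moreover have "1 + real d * (2*real r - 1) \<le> 2*real r*(real d + 1)" using r by (simp add: algebra_simps)
    ultimately have "1 + real n*(2*real r - 1) \<le> 2*real r*(real d + 1)" by linarith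
    then have "(1 + real n*(2*real r - 1))*(3*B) \<le> (2*real r*(real d + 1))*(3*B)"
      using Bp by (intro mult_right_mono) auto
    also have "\<dots> = (6*real r*(real d+1))^Suc k" by (simp add: B_def algebra_simps)
    finally show "(1 + real n*(2*real r - 1))*(3*B) \<le> (6*real r*(real d+1))^Suc k" .
    show "0 \<le> (1 + real n*(2*real r - 1))*(3*B)" using r Bp by simp
  qed
  finally show ?case .
qed

lemma top_bound:
  assumes r: "1 \<le> r" and m: "real m \<le> 3^r" and l: "1 \<le> l" and n: "n \<le> d"
    and h: "hom m l a" and b: "bnd a"
  shows "pen n T (\<lambda>T z. (ev m a z)^2) (\<lambda>_. 0) \<le> (1 + real n) * (3*(6*real r*(real d+1))^(l-1))"
proof -
  define B where "B = (6*real r*(real d+1))^(l-1)"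
  have Bp: "0 < B" using r by (simp add: B_def)
  have y0: "(ev m a (\<lambda>_. 0))^2 \<le> 3*B"
  proof -
    have "a {} = 0" using hom_empty[OF h] l by simp
    then show ?thesis using Bp by (simp add: ev_zero)
  qed
  have g: "pen j T (\<lambda>T z. (gf m a T z)^(2*1)) (\<lambda>_. 0) \<le> (3*B)^1" if "j < n" for j
  proof -
    have "pen j T (\<lambda>T z. (gf m a T z)^(2*r)) (\<lambda>_. 0) \<le> (3*B)^r"
    proof (rule gf_pen_bound[OF r m])
      show "0 \<le> B" using Bp by simp
      fix i assume "i < m"
      have "hom m (l-1) (Dv i a)" using hom_Dv[OF \<open>i < m\<close> h] .
      moreover have "j \<le> d" using that n by simp
      ultimately show "pen j T (\<lambda>T z. (ev m (Dv i a) z)^(2*r)) (\<lambda>_. 0) \<le> B^r"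
        unfolding B_def using moment[OF r m _ _ bnd_Dv[OF b]] by blast
    qed
    moreover have "(pen j T (\<lambda>T z. (gf m a T z)^2) (\<lambda>_. 0))^r \<le> pen j T (\<lambda>T z. ((gf m a T z)^2)^r) (\<lambda>_. 0)"
      by (rule pen_jensen) simp
    moreover have "(\<lambda>T z. ((gf m a T z)^2)^r) = (\<lambda>T z. (gf m a T z)^(2*r))" by (simp add: power_mult)
    ultimately have "(pen j T (\<lambda>T z. (gf m a T z)^2) (\<lambda>_. 0))^r \<le> (3*B)^r"
      by simp
    then have "pen j T (\<lambda>T z. (gf m a T z)^2) (\<lambda>_. 0) \<le> 3*B"
    proof -
      obtain r' where "r = Suc r'" using r by (cases r) auto
      then show ?thesis using \<open>(pen j T (\<lambda>T z. (gf m a T z)^2) (\<lambda>_. 0))^r \<le> (3*B)^r\<close> Bp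
        by (metis less_eq_real_def mult_pos_pos power_le_imp_le_base zero_less_numeral)
    qed
    then show ?thesis by simp
  qed
  have "pen n T (\<lambda>T z. (ev m a z)^(2*1)) (\<lambda>_. 0) \<le> ((1 + real n*(2*real 1 - 1))*(3*B))^1"
  proof -
    have "0 < 3*B" using Bp by simp
    from mart[of 1 "3*B" m a "\<lambda>_. 0" n T, OF _ this y0 g] show ?thesis by simp
  qed
  then show ?thesis by (simp add: B_def)
qed

lemma card_cube: "card (cube m) = 2^m"
  unfolding cube_def by (simp add: card_PiE) (simp add: numeral_2_eq_2)

lemma avg_flip:
  assumes i: "i < m"
  shows "(\<Sum>x\<in>cube m. (F x :: real)) = (\<Sum>x\<in>cube m. (F (x(i:=1)) + F (x(i:=-1)))/2)"
proof -
  define fl where "fl x = x(i := - x i)" for x :: "nat \<Rightarrow> real"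
  have mem: "fl x \<in> cube m" if "x \<in> cube m" for x
    using that i unfolding cube_def fl_def by (auto simp: PiE_iff extensional_def)
  have inv: "fl (fl x) = x" for x unfolding fl_def by auto
  have S: "(\<Sum>x\<in>cube m. F x) = (\<Sum>x\<in>cube m. F (fl x))"
    by (rule sum.reindex_bij_witness[of _ fl fl]) (auto simp: inv mem)
  have pw: "F x + F (fl x) = F (x(i:=1)) + F (x(i:=-1))" if "x \<in> cube m" for x
  proof -
    have "x i = 1 \<or> x i = -1" using that i unfolding cube_def by (auto simp: PiE_iff)
    then show ?thesis
    proof
      assume "x i = 1"
      then have "x(i:=1) = x" "fl x = x(i:=-1)" unfolding fl_def by auto
      then show ?thesis by simp
    next
      assume "x i = -1"
      then have "x(i:=-1) = x" "fl x = x(i:=1)" unfolding fl_def by auto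
      then show ?thesis by (simp add: add.commute)
    qed
  qed
  have "2 * (\<Sum>x\<in>cube m. F x) = (\<Sum>x\<in>cube m. F x + F (fl x))"
    using S by (simp add: sum.distrib)
  also have "\<dots> = (\<Sum>x\<in>cube m. F (x(i:=1)) + F (x(i:=-1)))"
    by (rule sum.cong) (auto simp: pw)
  finally show ?thesis by (simp add: sum_divide_distrib[symmetric])
qed

definition ov :: "(nat \<Rightarrow> real) \<Rightarrow> (nat \<Rightarrow> real) \<Rightarrow> nat \<Rightarrow> real" where
  "ov x z = (\<lambda>j. if z j = 0 then x j else z j)"

lemma ov_upd: "z i = 0 \<Longrightarrow> c \<noteq> 0 \<Longrightarrow> ov (x(i:=c)) z = ov x (z(i:=c))"
  unfolding ov_def by auto

lemma mono_avg:
  assumes S: "S \<subseteq> {0..<m}"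
  shows "(\<Sum>x\<in>cube m. \<Prod>j\<in>S. ov x z j) = 2^m * (\<Prod>j\<in>S. z j)"
proof (cases "\<exists>j\<in>S. z j = 0")
  case True
  then obtain j where j: "j \<in> S" "z j = 0" by blast
  have jm: "j < m" using j S by auto
  have fS: "finite S" using S finite_subset by blast
  have pr: "(\<Prod>k\<in>S. ov (x(j:=c)) z k) = c * (\<Prod>k\<in>S-{j}. ov x z k)" if "c \<noteq> 0" for x c
  proof -
    have "(\<Prod>k\<in>S. ov (x(j:=c)) z k) = ov (x(j:=c)) z j * (\<Prod>k\<in>S-{j}. ov (x(j:=c)) z k)"
      by (rule prod.remove[OF fS j(1)])
    also have "(\<Prod>k\<in>S-{j}. ov (x(j:=c)) z k) = (\<Prod>k\<in>S-{j}. ov x z k)"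
      by (rule prod.cong) (auto simp: ov_def)
    moreover have "ov (x(j:=c)) z j = c" using j(2) by (simp add: ov_def)
    ultimately show ?thesis by simp
  qed
  have "(\<Sum>x\<in>cube m. \<Prod>k\<in>S. ov x z k) = (\<Sum>x\<in>cube m. ((\<Prod>k\<in>S. ov (x(j:=1)) z k) + (\<Prod>k\<in>S. ov (x(j:=-1)) z k))/2)"
    by (rule avg_flip[OF jm])
  also have "\<dots> = 0" by (simp add: pr)
  moreover have "(\<Prod>k\<in>S. z k) = 0" using fS j by (intro prod_zero) auto
  ultimately show ?thesis by simp
next
  case False
  have "(\<Sum>x\<in>cube m. \<Prod>j\<in>S. ov x z j) = (\<Sum>x\<in>cube m. \<Prod>j\<in>S. z j)"
    by (intro sum.cong prod.cong) (use False in \<open>auto simp: ov_def\<close>)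
  then show ?thesis by (simp add: card_cube)
qed

lemma ev_avg:
  "(\<Sum>x\<in>cube m. ev m a (ov x z)) = 2^m * ev m a z"
proof -
  have "(\<Sum>x\<in>cube m. ev m a (ov x z)) = (\<Sum>S\<in>Pow {0..<m}. a S * (\<Sum>x\<in>cube m. \<Prod>j\<in>S. ov x z j))"
    unfolding ev_def by (subst sum.swap) (simp add: sum_distrib_left)
  also have "\<dots> = (\<Sum>S\<in>Pow {0..<m}. a S * (2^m * (\<Prod>j\<in>S. z j)))"
    by (rule sum.cong) (auto simp: mono_avg)
  finally show ?thesis by (simp add: ev_def sum_distrib_left algebra_simps)
qed

fun lv :: "dtree \<Rightarrow> real" where
  "lv (Leaf b) = (if b then 1 else -1)"
| "lv (Node i l r) = 0"

lemma corr:
  "dt_vars_below m T \<Longrightarrow> dt_depth T \<le> n \<Longrightarrow> (\<forall>j. z j = -1 \<or> z j = 0 \<or> z j = 1) \<Longrightarrow>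
   (\<Sum>x\<in>cube m. dt_eval T (ov x z) * ev m a (ov x z)) / 2^m = pen n T (\<lambda>T z. lv T * ev m a z) z"
proof (induction T arbitrary: n z)
  case (Leaf b)
  have "(\<Sum>x\<in>cube m. dt_eval (Leaf b) (ov x z) * ev m a (ov x z)) = lv (Leaf b) * (\<Sum>x\<in>cube m. ev m a (ov x z))"
    by (simp add: sum_distrib_left)
  also have "\<dots> = lv (Leaf b) * (2^m * ev m a z)" by (simp add: ev_avg)
  finally have L: "(\<Sum>x\<in>cube m. dt_eval (Leaf b) (ov x z) * ev m a (ov x z)) / 2^m = lv (Leaf b) * ev m a z"
    by simp
  show ?case using L by (cases n) auto
next
  case (Node i l r)
  obtain n' where n: "n = Suc n'" using Node.prems(2) by (cases n) auto
  have im: "i < m" and vl: "dt_vars_below m l" and vr: "dt_vars_below m r" using Node.prems(1) by auto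
  have dl: "dt_depth l \<le> n'" and dr: "dt_depth r \<le> n'" using Node.prems(2) n by auto
  let ?F = "\<lambda>y. dt_eval (Node i l r) y * ev m a y"
  consider "z i = 0" | "z i = 1" | "z i = -1" using Node.prems(3) by blast
  then show ?case
  proof cases
    case 1
    have zr: "\<forall>j. (z(i:=1)) j = -1 \<or> (z(i:=1)) j = 0 \<or> (z(i:=1)) j = 1" using Node.prems(3) by auto
    have zl: "\<forall>j. (z(i:=-1)) j = -1 \<or> (z(i:=-1)) j = 0 \<or> (z(i:=-1)) j = 1" using Node.prems(3) by auto
    have "(\<Sum>x\<in>cube m. ?F (ov x z)) = (\<Sum>x\<in>cube m. (?F (ov (x(i:=1)) z) + ?F (ov (x(i:=-1)) z))/2)"
      by (rule avg_flip[OF im])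
    also have "\<dots> = (\<Sum>x\<in>cube m. (dt_eval r (ov x (z(i:=1))) * ev m a (ov x (z(i:=1)))
                 + dt_eval l (ov x (z(i:=-1))) * ev m a (ov x (z(i:=-1))))/2)"
      using 1 by (simp add: ov_upd) (simp add: ov_def)
    also have "\<dots> = ((\<Sum>x\<in>cube m. dt_eval r (ov x (z(i:=1))) * ev m a (ov x (z(i:=1))))
                 + (\<Sum>x\<in>cube m. dt_eval l (ov x (z(i:=-1))) * ev m a (ov x (z(i:=-1)))))/2"
      by (simp add: sum.distrib sum_divide_distrib[symmetric])
    finally have "(\<Sum>x\<in>cube m. ?F (ov x z)) / 2^m = ((\<Sum>x\<in>cube m. dt_eval r (ov x (z(i:=1))) * ev m a (ov x (z(i:=1))))/2^m
                 + (\<Sum>x\<in>cube m. dt_eval l (ov x (z(i:=-1))) * ev m a (ov x (z(i:=-1))))/2^m)/2"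
      by (simp add: add_divide_distrib)
    also have "\<dots> = (pen n' r (\<lambda>T z. lv T * ev m a z) (z(i:=1)) + pen n' l (\<lambda>T z. lv T * ev m a z) (z(i:=-1)))/2"
      by (simp only: Node.IH(1)[OF vl dl zl] Node.IH(2)[OF vr dr zr])
    finally show ?thesis using 1 n by simp
  next
    case 2
    have "(\<Sum>x\<in>cube m. ?F (ov x z)) = (\<Sum>x\<in>cube m. dt_eval r (ov x z) * ev m a (ov x z))"
      using 2 by (intro sum.cong) (auto simp: ov_def)
    then show ?thesis using 2 n Node.IH(2)[OF vr dr Node.prems(3)] by simp
  next
    case 3
    have "(\<Sum>x\<in>cube m. ?F (ov x z)) = (\<Sum>x\<in>cube m. dt_eval l (ov x z) * ev m a (ov x z))"
      using 3 by (intro sum.cong) (auto simp: ov_def)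
    then show ?thesis using 3 n Node.IH(1)[OF vl dl Node.prems(3)] by simp
  qed
qed

lemma sgn_times_self: "sgn (x::real) * x = \<bar>x\<bar>"
  by (cases rule: linorder_cases[of x 0]) auto

definition sa :: "nat \<Rightarrow> dtree \<Rightarrow> nat \<Rightarrow> nat set \<Rightarrow> real" where
  "sa m T l S = (if S \<subseteq> {0..<m} \<and> card S = l then sgn (fourier_coeff m (dt_eval T) S) else 0)"

lemma sa_hom: "hom m l (sa m T l)"
  unfolding hom_def sa_def by auto

lemma sa_bnd: "bnd (sa m T l)"
  unfolding bnd_def sa_def by (auto simp: abs_sgn_eq)

lemma L1_eq:
  assumes "dt_vars_below m T"
  shows "L1_level m (dt_eval T) l = pen (dt_depth T) T (\<lambda>U z. lv U * ev m (sa m T l) z) (\<lambda>_. 0)"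
proof -
  let ?f = "dt_eval T" and ?a = "sa m T l"
  have ov0: "ov x (\<lambda>_. 0) = x" for x by (simp add: ov_def)
  have c: "(\<Sum>x\<in>cube m. ?f x * ev m ?a x) / 2^m = pen (dt_depth T) T (\<lambda>U z. lv U * ev m ?a z) (\<lambda>_. 0)"
    using corr[OF assms, of "dt_depth T" "\<lambda>_. 0" ?a] by (simp add: ov0)
  have "(\<Sum>x\<in>cube m. ?f x * ev m ?a x) / 2^m = (\<Sum>S\<in>Pow {0..<m}. ?a S * fourier_coeff m ?f S)"
    unfolding ev_def fourier_coeff_def
    by (simp add: sum_distrib_left sum_divide_distrib sum.swap[of _ "cube m"] algebra_simps)
  also have "\<dots> = (\<Sum>S\<in>{S\<in>Pow {0..<m}. card S = l}. sgn (fourier_coeff m ?f S) * fourier_coeff m ?f S)"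
    by (subst sum.inter_filter) (auto simp: sa_def intro!: sum.cong)
  also have "\<dots> = L1_level m ?f l"
    unfolding L1_level_def by (intro sum.cong) (auto simp: sgn_times_self)
  finally show ?thesis using c by simp
qed

lemma L1_sq:
  assumes "dt_vars_below m T"
  shows "(L1_level m (dt_eval T) l)^2 \<le> pen (dt_depth T) T (\<lambda>U z. (ev m (sa m T l) z)^2) (\<lambda>_. 0)"
proof -
  let ?P = "pen (dt_depth T) T (\<lambda>U z. lv U * ev m (sa m T l) z) (\<lambda>_. 0)"
  let ?Q = "pen (dt_depth T) T (\<lambda>U z. \<bar>ev m (sa m T l) z\<bar>) (\<lambda>_. 0)"
  have nn: "0 \<le> L1_level m (dt_eval T) l" unfolding L1_level_def by (simp add: sum_nonneg)
  have lv1: "\<bar>lv T\<bar> \<le> 1" for T by (cases T) auto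
  have "L1_level m (dt_eval T) l \<le> \<bar>?P\<bar>" using L1_eq[OF assms] by simp
  also have "\<dots> \<le> pen (dt_depth T) T (\<lambda>U z. \<bar>lv U * ev m (sa m T l) z\<bar>) (\<lambda>_. 0)" by (rule pen_abs)
  also have "\<dots> \<le> ?Q"
  proof (rule pen_mono)
    fix U z
    have "\<bar>lv U\<bar> * \<bar>ev m (sa m T l) z\<bar> \<le> 1 * \<bar>ev m (sa m T l) z\<bar>"
      using lv1 by (intro mult_right_mono) auto
    then show "\<bar>lv U * ev m (sa m T l) z\<bar> \<le> \<bar>ev m (sa m T l) z\<bar>" by (simp add: abs_mult)
  qed
  finally have "(L1_level m (dt_eval T) l)^2 \<le> ?Q^2" using nn by (intro power_mono) auto
  also have "\<dots> \<le> pen (dt_depth T) T (\<lambda>U z. \<bar>ev m (sa m T l) z\<bar>^2) (\<lambda>_. 0)" by (rule pen_jensen) simp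
  finally show ?thesis by simp
qed

lemma L1_bound_general:
  assumes vb: "dt_vars_below m T" and dd: "dt_depth T = d" and l: "1 \<le> l" and r: "1 \<le> r" and m: "real m \<le> 3^r"
  shows "(L1_level m (dt_eval T) l)^2 \<le> (1 + real d) * (3*(6*real r*(real d+1))^(l-1))"
proof -
  have "(L1_level m (dt_eval T) l)^2 \<le> pen (dt_depth T) T (\<lambda>U z. (ev m (sa m T l) z)^2) (\<lambda>_. 0)"
    by (rule L1_sq[OF vb])
  also have "\<dots> \<le> (1 + real (dt_depth T)) * (3*(6*real r*(real d+1))^(l-1))"
    by (rule top_bound[OF r m l _ sa_hom sa_bnd]) (simp add: dd)
  also have "\<dots> = (1 + real d) * (3*(6*real r*(real d+1))^(l-1))" using dd by simp
  finally show ?thesis .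
qed

lemma L1_zero_level:
  assumes "dt_vars_below m T"
  shows "(L1_level m (dt_eval T) 0)^2 \<le> 1"
proof -
  have "(L1_level m (dt_eval T) 0)^2 \<le> pen (dt_depth T) T (\<lambda>U z. (ev m (sa m T 0) z)^2) (\<lambda>_. 0)"
    by (rule L1_sq[OF assms])
  also have "\<dots> \<le> 1" using deg0_bound[where m=m and a="sa m T 0" and n="dt_depth T" and T=T and r=1 and z="\<lambda>_. 0"] sa_hom sa_bnd by simp
  finally show ?thesis .
qed

lemma L1_empty:
  assumes "m < l"
  shows "L1_level m f l = 0"
proof -
  have "{S. S \<subseteq> {0..<m} \<and> card S = l} = {}"
  proof (rule equals0I)
    fix S assume "S \<in> {S. S \<subseteq> {0..<m} \<and> card S = l}"
    then have "S \<subseteq> {0..<m}" "card S = l" by auto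
    then have "card S \<le> m" using card_mono[of "{0..<m}" S] by simp
    then show False using assms \<open>card S = l\<close> by simp
  qed
  then show ?thesis unfolding L1_level_def by (simp only: sum.empty)
qed

lemma ln2_ge: "1/2 \<le> ln (2::real)"
proof -
  have "ln (exp (1/2)) \<le> ln (2::real)" using exp_half_le2 by (subst ln_le_cancel_iff) auto
  then show ?thesis by simp
qed

theorem mainTheorem4:
  shows "\<exists>C::real. C > 0 \<and>
    (\<forall>(m::nat) (d::nat) (t::dtree) (l::nat).
       dt_vars_below m t \<and> dt_depth t = d \<and> l \<le> d \<longrightarrow>
       L1_level m (dt_eval t) l
         \<le> sqrt ((C * real d) ^ l * (C * ln (real m)) ^ (l - 1)))"
proof (intro exI[of _ 100] conjI allI impI)
  fix m d t l
  assume H: "dt_vars_below m t \<and> dt_depth t = d \<and> l \<le> d"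
  then have vb: "dt_vars_below m t" and dd: "dt_depth t = d" and ld: "l \<le> d" by auto
  let ?L = "L1_level m (dt_eval t) l"
  consider "l = 0" | "l = 1" | "2 \<le> l" "m < 2" | "2 \<le> l" "2 \<le> m" by linarith
  then show "?L \<le> sqrt ((100 * real d) ^ l * (100 * ln (real m)) ^ (l - 1))"
  proof cases
    case 1
    then show ?thesis using L1_zero_level[OF vb] by (simp add: abs_square_le_1)
  next
    case 2
    have r: "1 \<le> m + 1" by simp
    have "m < 2^(m+1)" using less_exp[of "m+1"] by simp
    then have "real m \<le> 2^(m+1)" by (metis less_imp_le of_nat_less_numeral_power_cancel_iff)
    also have "(2::real)^(m+1) \<le> 3^(m+1)" by (intro power_mono) auto
    finally have mr: "real m \<le> 3^(m+1)" .
    have d1: "1 \<le> d" using 2 ld by simp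
    have "?L^2 \<le> (1 + real d) * (3*(6*real (m+1)*(real d+1))^(l-1))"
    proof -
      have "1 \<le> l" using 2 by simp
      from L1_bound_general[OF vb dd this r mr] show ?thesis .
    qed
    also have "\<dots> = 3 * (1 + real d)" using 2 by simp
    also have "\<dots> \<le> 100 * real d" using d1 by simp
    finally show ?thesis using 2 by (simp add: real_le_rsqrt)
  next
    case 3
    then have "?L = 0" by (intro L1_empty) simp
    moreover have "0 \<le> (100 * real d) ^ l * (100 * ln (real m)) ^ (l - 1)"
      using 3 by (cases "m = 0") auto
    ultimately show ?thesis by simp
  next
    case 4
    define X where "X = ln (real m)"
    have X2: "1/2 \<le> X"
    proof -
      have "ln 2 \<le> ln (real m)" using 4 by (subst ln_le_cancel_iff) auto
      then show ?thesis using ln2_ge by (simp add: X_def)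
    qed
    define r where "r = nat \<lceil>X\<rceil>"
    have rX: "real r < X + 1" using X2 unfolding r_def by linarith
    have rX2: "X \<le> real r" using X2 unfolding r_def by linarith
    have r1: "1 \<le> r" using X2 unfolding r_def by linarith
    have mr: "real m \<le> 3^r"
    proof -
      have "real m = exp X" using 4 by (simp add: X_def)
      also have "\<dots> \<le> exp (real r)" using rX2 by simp
      also have "exp (real r) = exp 1 ^ r" by (simp add: exp_of_nat_mult[symmetric])
      also have "\<dots> \<le> 3^r" using exp_le by (intro power_mono) auto
      finally show ?thesis .
    qed
    have d1: "1 \<le> d" using 4 ld by simp
    have "?L^2 \<le> (1 + real d) * (3*(6*real r*(real d+1))^(l-1))"
    proof -
      have "1 \<le> l" using 4 by simp
      from L1_bound_general[OF vb dd this r1 mr] show ?thesis .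
    qed
    also have "\<dots> = ((1 + real d)*3) * (6*real r*(real d+1))^(l-1)" by (simp add: ac_simps)
    also have "\<dots> \<le> (100 * real d) * ((100 * real d) * (100 * X))^(l-1)"
    proof (rule mult_mono)
      show "(1 + real d)*3 \<le> 100 * real d" using d1 by simp
      have "6*real r*(real d+1) \<le> 6*(3*X)*(2*real d)"
        using rX X2 d1 by (intro mult_mono) auto
      also have "\<dots> \<le> (100 * real d) * (100 * X)" using X2 d1 by simp
      finally have "6*real r*(real d+1) \<le> (100 * real d) * (100 * X)" .
      then show "(6*real r*(real d+1))^(l-1) \<le> ((100 * real d) * (100 * X))^(l-1)"
        by (intro power_mono) auto
    qed (use X2 d1 in auto)
    also have "\<dots> = (100 * real d) ^ l * (100 * ln (real m)) ^ (l - 1)"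
    proof -
      obtain l' where "l = Suc l'" using 4 by (cases l) auto
      moreover have h: "(100::real)^l' * 100^l' = 10000^l'" by (simp add: power_mult_distrib[symmetric])
      ultimately show ?thesis by (simp add: X_def power_mult_distrib h)
    qed
    finally show ?thesis by (simp add: real_le_rsqrt)
  qed
qed simp

end
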